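(* Let $\mathit{Vee}$ be the graph with vertices $u_1,u_2,u_3$ and edges $(u_1,u_2),(u_1,u_3)$, and let $\vec C_3$ be the directed 3-cycle with vertices $v_1,v_2,v_3$ and edges $(v_1,v_2),(v_2,v_3),(v_3,v_1)$. Then $\hom(\mathit{Vee},T)\ge\hom(\vec C_3,T)$ for every graph $T$, and $\mathsf{HDE}(\mathit{Vee},\vec C_3)=1$.
   Context: Graphs are finite directed graphs (loops allowed); a homomorphism $F\to T$ is a vertex map sending edges to edges, and $\hom(F,T)$ is their number. For $F\to G$, $\mathsf{HDE}(F,G)=\sup\{c\in\mathbb R:\hom(F,T)\ge\hom(G,T)^c\text{ for all graphs }T\}$. *)

theory Defs
  imports Complex_Main "HOL-Library.FuncSet"
begin

definition graph :: "'a set \<Rightarrow> ('a \<times> 'a) set \<Rightarrow> bool" where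
  "graph V E \<longleftrightarrow> finite V \<and> E \<subseteq> V \<times> V"

text \<open>Homomorphisms (F = (VF,EF)) \<rightarrow> (T = (VT,ET)): vertex maps VF \<rightarrow> VT (extensional,
  so that they are counted as maps on VF) sending edges to edges.\<close>
definition homs :: "'a set \<Rightarrow> ('a \<times> 'a) set \<Rightarrow> 'b set \<Rightarrow> ('b \<times> 'b) set \<Rightarrow> ('a \<Rightarrow> 'b) set" where
  "homs VF EF VT ET = {f \<in> VF \<rightarrow>\<^sub>E VT. \<forall>(x, y) \<in> EF. (f x, f y) \<in> ET}"

definition hom :: "'a set \<Rightarrow> ('a \<times> 'a) set \<Rightarrow> 'b set \<Rightarrow> ('b \<times> 'b) set \<Rightarrow> nat" where
  "hom VF EF VT ET = card (homs VF EF VT ET)"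

text \<open>Homomorphism domination exponent. The target graphs T range over all finite graphs;
  every finite graph is isomorphic to one with vertices in nat, so T is taken with
  vertex type nat.\<close>
definition HDE :: "'a set \<Rightarrow> ('a \<times> 'a) set \<Rightarrow> 'c set \<Rightarrow> ('c \<times> 'c) set \<Rightarrow> real" where
  "HDE VF EF VG EG = Sup {c :: real. \<forall>(VT :: nat set) ET. graph VT ET \<longrightarrow>
        real (hom VG EG VT ET) powr c \<le> real (hom VF EF VT ET)}"

definition Vee_V :: "nat set" where "Vee_V = {1, 2, 3}"
definition Vee_E :: "(nat \<times> nat) set" where "Vee_E = {(1, 2), (1, 3)}"
definition C3_V :: "nat set" where "C3_V = {1, 2, 3}"
definition C3_E :: "(nat \<times> nat) set" where "C3_E = {(1, 2), (2, 3), (3, 1)}"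

end

theory Submission
  imports Defs
begin

lemma rot3:
  fixes f :: "'a \<Rightarrow> 'a \<Rightarrow> 'a \<Rightarrow> real"
  shows "(\<Sum>x\<in>V. \<Sum>y\<in>V. \<Sum>z\<in>V. f y z x) = (\<Sum>x\<in>V. \<Sum>y\<in>V. \<Sum>z\<in>V. f x y z)"
proof -
  have "(\<Sum>x\<in>V. \<Sum>y\<in>V. \<Sum>z\<in>V. f y z x) = (\<Sum>y\<in>V. \<Sum>x\<in>V. \<Sum>z\<in>V. f y z x)"
    by (rule sum.swap)
  also have "\<dots> = (\<Sum>y\<in>V. \<Sum>z\<in>V. \<Sum>x\<in>V. f y z x)"
    by (rule sum.cong[OF refl], rule sum.swap)
  finally show ?thesis .
qed

lemma amgm3:
  fixes a b c :: real
  assumes "a > 0" "b > 0" "c > 0"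
  shows "3 \<le> a/b + b/c + c/a"
proof -
  have "ln (a/b) + ln (b/c) + ln (c/a) = 0"
    using assms by (simp add: ln_div)
  moreover have "ln (a/b) \<le> a/b - 1" "ln (b/c) \<le> b/c - 1" "ln (c/a) \<le> c/a - 1"
    using assms by (auto intro!: ln_le_minus_one)
  ultimately show ?thesis by linarith
qed

lemma main_ineq:
  fixes V :: "'a set" and E
  defines "e \<equiv> \<lambda>x y. (of_bool ((x,y)\<in>E) :: real)"
  defines "d \<equiv> \<lambda>x. \<Sum>y\<in>V. e x y"
  assumes g: "graph V E"
  shows "(\<Sum>x\<in>V. \<Sum>y\<in>V. \<Sum>z\<in>V. e x y * e y z * e z x) \<le> (\<Sum>x\<in>V. \<Sum>y\<in>V. \<Sum>z\<in>V. e x y * e x z)"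
proof -
  have fin: "finite V" and EV: "E \<subseteq> V \<times> V" using g by (auto simp: graph_def)
  have dpos: "d x \<ge> 1" if "(x,y) \<in> E" for x y
  proof -
    have "y \<in> V" using that EV by auto
    hence "e x y \<le> d x" unfolding d_def using fin
      by (intro member_le_sum) (auto simp: e_def)
    thus ?thesis using that by (simp add: e_def)
  qed
  have d0: "d x \<ge> 0" for x unfolding d_def e_def by (simp add: sum_nonneg)
  define S1 where "S1 = (\<Sum>x\<in>V. \<Sum>y\<in>V. \<Sum>z\<in>V. e x y * e y z * e z x * (d x / d y))"
  define S2 where "S2 = (\<Sum>x\<in>V. \<Sum>y\<in>V. \<Sum>z\<in>V. e x y * e y z * e z x * (d y / d z))"
  define S3 where "S3 = (\<Sum>x\<in>V. \<Sum>y\<in>V. \<Sum>z\<in>V. e x y * e y z * e z x * (d z / d x))"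
  have pt: "3 * (e x y * e y z * e z x) \<le> e x y * e y z * e z x * (d x / d y)
     + e x y * e y z * e z x * (d y / d z) + e x y * e y z * e z x * (d z / d x)" for x y z
  proof (cases "(x,y)\<in>E \<and> (y,z)\<in>E \<and> (z,x)\<in>E")
    case True
    hence "3 \<le> d x / d y + d y / d z + d z / d x"
      using dpos by (intro amgm3) (auto intro: less_le_trans[OF zero_less_one])
    thus ?thesis using True by (simp add: e_def)
  next
    case False thus ?thesis by (auto simp: e_def)
  qed
  have "3 * (\<Sum>x\<in>V. \<Sum>y\<in>V. \<Sum>z\<in>V. e x y * e y z * e z x) \<le> S1 + S2 + S3"
    unfolding S1_def S2_def S3_def sum_distrib_left sum.distrib[symmetric]
    by (intro sum_mono pt)
  moreover have "S2 = S1"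
    unfolding S1_def S2_def
    by (subst rot3[symmetric]) (simp add: mult_ac)
  moreover have "S3 = S1"
    unfolding S1_def S3_def
    by (subst rot3) (simp add: mult_ac)
  ultimately have 1: "(\<Sum>x\<in>V. \<Sum>y\<in>V. \<Sum>z\<in>V. e x y * e y z * e z x) \<le> S1" by linarith
  have "S1 \<le> (\<Sum>x\<in>V. \<Sum>y\<in>V. \<Sum>z\<in>V. e x y * e y z * (d x / d y))"
    unfolding S1_def
    by (intro sum_mono) (auto simp: e_def d0 divide_nonneg_nonneg)
  also have "\<dots> = (\<Sum>x\<in>V. \<Sum>y\<in>V. e x y * (d x / d y) * d y)"
  proof (intro sum.cong refl)
    fix x y
    have "(\<Sum>z\<in>V. e x y * e y z * (d x / d y)) = e x y * (d x / d y) * (\<Sum>z\<in>V. e y z)"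
      by (simp add: sum_distrib_left sum_divide_distrib mult_ac)
    thus "(\<Sum>z\<in>V. e x y * e y z * (d x / d y)) = e x y * (d x / d y) * d y"
      by (simp add: d_def)
  qed
  also have "\<dots> \<le> (\<Sum>x\<in>V. \<Sum>y\<in>V. e x y * d x)"
  proof (intro sum_mono)
    fix x y
    show "e x y * (d x / d y) * d y \<le> e x y * d x"
      using dpos[of x y] by (cases "(x,y)\<in>E") (auto simp: e_def)
  qed
  also have "\<dots> = (\<Sum>x\<in>V. \<Sum>y\<in>V. \<Sum>z\<in>V. e x y * e x z)"
    unfolding d_def by (simp add: sum_distrib_left sum_distrib_right mult_ac)
  finally show ?thesis using 1 by linarith
qed

lemma card_triple_sum:
  assumes "finite V" "S \<subseteq> V \<times> V \<times> V"
  shows "real (card S) = (\<Sum>x\<in>V. \<Sum>y\<in>V. \<Sum>z\<in>V. (of_bool ((x,y,z)\<in>S) :: real))"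
proof -
  have "(\<Sum>x\<in>V. \<Sum>y\<in>V. \<Sum>z\<in>V. (of_bool ((x,y,z)\<in>S) :: real))
      = (\<Sum>x\<in>V. \<Sum>p\<in>V\<times>V. (of_bool ((x,p)\<in>S) :: real))"
    by (simp add: sum.cartesian_product split_def)
  also have "\<dots> = (\<Sum>t\<in>V\<times>(V\<times>V). (of_bool (t\<in>S) :: real))"
    by (simp add: sum.cartesian_product split_def)
  also have "\<dots> = real (card S)"
    using assms by (simp add: Int_absorb1 Int_def[symmetric])
  finally show ?thesis by simp
qed

lemma hom_C3:
  assumes "graph V E"
  shows "hom C3_V C3_E V E = card {(x,y,z). (x,y)\<in>E \<and> (y,z)\<in>E \<and> (z,x)\<in>E}"
proof -
  let ?T = "{(x,y,z). (x,y)\<in>E \<and> (y,z)\<in>E \<and> (z,x)\<in>E}"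
  let ?g = "\<lambda>f. (f (1::nat), f 2, f 3)"
  have EV: "E \<subseteq> V \<times> V" using assms by (simp add: graph_def)
  have "bij_betw ?g (homs C3_V C3_E V E) ?T"
  proof (rule bij_betw_imageI)
    show "inj_on ?g (homs C3_V C3_E V E)"
    proof (rule inj_onI)
      fix f h assume f: "f \<in> homs C3_V C3_E V E" and h: "h \<in> homs C3_V C3_E V E" and eq: "?g f = ?g h"
      show "f = h"
      proof (rule extensionalityI)
        show "f \<in> extensional C3_V" using f by (auto simp: homs_def PiE_def)
        show "h \<in> extensional C3_V" using h by (auto simp: homs_def PiE_def)
        fix x assume "x \<in> C3_V" thus "f x = h x" using eq by (auto simp: C3_V_def)
      qed
    qed
    show "?g ` homs C3_V C3_E V E = ?T"
    proof
      show "?g ` homs C3_V C3_E V E \<subseteq> ?T"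
        by (auto simp: homs_def C3_E_def)
    next
      show "?T \<subseteq> ?g ` homs C3_V C3_E V E"
      proof clarify
        fix a b c assume t: "(a,b)\<in>E" "(b,c)\<in>E" "(c,a)\<in>E"
        define f where "f = (\<lambda>n::nat. if n = 1 then a else if n = 2 then b else if n = 3 then c else undefined)"
        have "f \<in> homs C3_V C3_E V E"
          using t EV by (auto simp: homs_def f_def C3_V_def C3_E_def PiE_def extensional_def)
        moreover have "?g f = (a,b,c)" by (simp add: f_def)
        ultimately show "(a,b,c) \<in> ?g ` homs C3_V C3_E V E" by force
      qed
    qed
  qed
  thus ?thesis unfolding hom_def by (rule bij_betw_same_card)
qed

lemma hom_Vee:
  assumes "graph V E"
  shows "hom Vee_V Vee_E V E = card {(x,y,z). (x,y)\<in>E \<and> (x,z)\<in>E}"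
proof -
  let ?T = "{(x,y,z). (x,y)\<in>E \<and> (x,z)\<in>E}"
  let ?g = "\<lambda>f. (f (1::nat), f 2, f 3)"
  have EV: "E \<subseteq> V \<times> V" using assms by (simp add: graph_def)
  have "bij_betw ?g (homs Vee_V Vee_E V E) ?T"
  proof (rule bij_betw_imageI)
    show "inj_on ?g (homs Vee_V Vee_E V E)"
    proof (rule inj_onI)
      fix f h assume f: "f \<in> homs Vee_V Vee_E V E" and h: "h \<in> homs Vee_V Vee_E V E" and eq: "?g f = ?g h"
      show "f = h"
      proof (rule extensionalityI)
        show "f \<in> extensional Vee_V" using f by (auto simp: homs_def PiE_def)
        show "h \<in> extensional Vee_V" using h by (auto simp: homs_def PiE_def)
        fix x assume "x \<in> Vee_V" thus "f x = h x" using eq by (auto simp: Vee_V_def)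
      qed
    qed
    show "?g ` homs Vee_V Vee_E V E = ?T"
    proof
      show "?g ` homs Vee_V Vee_E V E \<subseteq> ?T"
        by (auto simp: homs_def Vee_E_def)
    next
      show "?T \<subseteq> ?g ` homs Vee_V Vee_E V E"
      proof clarify
        fix a b c assume t: "(a,b)\<in>E" "(a,c)\<in>E"
        define f where "f = (\<lambda>n::nat. if n = 1 then a else if n = 2 then b else if n = 3 then c else undefined)"
        have "f \<in> homs Vee_V Vee_E V E"
          using t EV by (auto simp: homs_def f_def Vee_V_def Vee_E_def PiE_def extensional_def)
        moreover have "?g f = (a,b,c)" by (simp add: f_def)
        ultimately show "(a,b,c) \<in> ?g ` homs Vee_V Vee_E V E" by force
      qed
    qed
  qed
  thus ?thesis unfolding hom_def by (rule bij_betw_same_card)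
qed

lemma part1:
  assumes g: "graph V E"
  shows "hom C3_V C3_E V E \<le> hom Vee_V Vee_E V E"
proof -
  have fin: "finite V" and EV: "E \<subseteq> V \<times> V" using g by (auto simp: graph_def)
  have "real (hom C3_V C3_E V E) = (\<Sum>x\<in>V. \<Sum>y\<in>V. \<Sum>z\<in>V.
      (of_bool ((x,y)\<in>E) :: real) * of_bool ((y,z)\<in>E) * of_bool ((z,x)\<in>E))"
    unfolding hom_C3[OF g] using EV by (subst card_triple_sum[OF fin]) (auto simp: of_bool_conj mult.assoc)
  also have "\<dots> \<le> (\<Sum>x\<in>V. \<Sum>y\<in>V. \<Sum>z\<in>V.
      (of_bool ((x,y)\<in>E) :: real) * of_bool ((x,z)\<in>E))"
    by (rule main_ineq[OF g])
  also have "\<dots> = real (hom Vee_V Vee_E V E)"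
    unfolding hom_Vee[OF g] using EV by (subst card_triple_sum[OF fin]) (auto simp: of_bool_conj)
  finally show ?thesis by linarith
qed

lemma full_homs:
  assumes "EF \<subseteq> VF \<times> VF" "finite VF"
  shows "hom VF EF VT (VT \<times> VT) = card VT ^ card VF"
proof -
  have "homs VF EF VT (VT \<times> VT) = VF \<rightarrow>\<^sub>E VT"
    using assms(1) by (auto simp: homs_def PiE_def Pi_def)
  thus ?thesis unfolding hom_def using assms(2) by (simp add: card_PiE)
qed

lemma c3_8: "hom C3_V C3_E ({0,1}::nat set) ({0,1} \<times> {0,1}) = 8"
  by (subst full_homs) (auto simp: C3_V_def C3_E_def)
lemma vee_8: "hom Vee_V Vee_E ({0,1}::nat set) ({0,1} \<times> {0,1}) = 8"
  by (subst full_homs) (auto simp: Vee_V_def Vee_E_def)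

theorem mainTheorem7:
  shows "(\<forall>(VT :: 'a set) ET. graph VT ET \<longrightarrow> hom C3_V C3_E VT ET \<le> hom Vee_V Vee_E VT ET)
         \<and> HDE Vee_V Vee_E C3_V C3_E = 1"
proof
  show "\<forall>(VT :: 'a set) ET. graph VT ET \<longrightarrow> hom C3_V C3_E VT ET \<le> hom Vee_V Vee_E VT ET"
    using part1 by blast
  let ?S = "{c :: real. \<forall>(VT :: nat set) ET. graph VT ET \<longrightarrow>
        real (hom C3_V C3_E VT ET) powr c \<le> real (hom Vee_V Vee_E VT ET)}"
  have "1 \<in> ?S"
    using part1 by (auto simp: powr_one)
  moreover have "c \<le> 1" if "c \<in> ?S" for c
  proof -
    have "graph ({0,1}::nat set) ({0,1} \<times> {0,1})" by (auto simp: graph_def)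
    with that have "(8::real) powr c \<le> 8 powr 1" using c3_8 vee_8 by force
    moreover have "(1::real) < 8" by simp
    ultimately show ?thesis using powr_le_cancel_iff by blast
  qed
  ultimately show "HDE Vee_V Vee_E C3_V C3_E = 1"
    unfolding HDE_def by (rule cSup_eq_maximum)
qed

end
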